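(* Let $s\le0$, $\sigma>0$, $\delta\in\mathbb{R}$. Suppose $u\in E^s_\sigma$ with $\operatorname{supp}\widehat u\subset\{\xi:\xi\ge\varepsilon_0\}$ for some $\varepsilon_0>0$. Then $\mathcal G(u)\in E^s_\sigma$ and there exists $C=C(\varepsilon_0,\delta,\sigma)>0$ such that $$\|\mathcal G(u)\|_{E^s_\sigma}\le\exp\big(C\|u\|_{E^s_\sigma}^2\big)\|u\|_{E^s_\sigma}.$$
   Context: $\langle\xi\rangle=(1+\xi^2)^{1/2}$; $E^s_\sigma$ is the space of $f$ in the dual of the Gelfand–Shilov space with $\|f\|_{E^s_\sigma}=\|\langle\xi\rangle^\sigma2^{s|\xi|}\widehat f\|_{L^2(\mathbb{R})}<\infty$. $u^*(x)=\overline{u(-x)}$. $\partial_x^{-1}f(x)=\frac12\big(\int_{-\infty}^xf(y)dy-\int_x^\infty f(y)dy\big)$. The gauge transform is $\mathcal G(u)=u\exp(-\delta\,\partial_x^{-1}(uu^* ))=u\sum_{k\ge0}\frac{(-\delta)^k}{k!}\big(\partial_x^{-1}(uu^* )\big)^k$. *)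

theory Defs
  imports "HOL-Analysis.Analysis"
begin

text \<open>Everything is expressed on the Fourier side: a tempered object u is represented
by its Fourier transform v = \<open>\<hat>u\<close> (convention \<open>\<hat>f(\<xi>) = \<integral> f(x) e^{-ix\<xi>} dx\<close>).\<close>

definition japanese :: "real \<Rightarrow> real" where
  "japanese \<xi> = sqrt (1 + \<xi>\<^sup>2)"

definition E_weight :: "real \<Rightarrow> real \<Rightarrow> real \<Rightarrow> real" where
  "E_weight s \<sigma> \<xi> = japanese \<xi> powr \<sigma> * 2 powr (s * \<bar>\<xi>\<bar>)"

definition in_E :: "real \<Rightarrow> real \<Rightarrow> (real \<Rightarrow> complex) \<Rightarrow> bool" where
  "in_E s \<sigma> v \<longleftrightarrow> v \<in> borel_measurable lborel \<and>
     integrable lborel (\<lambda>\<xi>. (E_weight s \<sigma> \<xi> * cmod (v \<xi>))\<^sup>2)"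

definition E_norm :: "real \<Rightarrow> real \<Rightarrow> (real \<Rightarrow> complex) \<Rightarrow> real" where
  "E_norm s \<sigma> v = sqrt (LINT \<xi>|lborel. (E_weight s \<sigma> \<xi> * cmod (v \<xi>))\<^sup>2)"

text \<open>Convolution; Fourier transform of a product: \<open>(fg)^ = (2\<pi>)^{-1} \<hat>f * \<hat>g\<close>.\<close>
definition conv :: "(real \<Rightarrow> complex) \<Rightarrow> (real \<Rightarrow> complex) \<Rightarrow> real \<Rightarrow> complex" where
  "conv f g \<xi> = (LINT \<eta>|lborel. f \<eta> * g (\<xi> - \<eta>))"

definition ft_mult :: "(real \<Rightarrow> complex) \<Rightarrow> (real \<Rightarrow> complex) \<Rightarrow> real \<Rightarrow> complex" where
  "ft_mult f g \<xi> = conv f g \<xi> / complex_of_real (2 * pi)"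

text \<open>Fourier transform of \<open>u^*(x) = conj (u(-x))\<close> is \<open>conj (\<hat>u(\<xi>))\<close>.\<close>
definition ft_star :: "(real \<Rightarrow> complex) \<Rightarrow> real \<Rightarrow> complex" where
  "ft_star v \<xi> = cnj (v \<xi>)"

text \<open>Fourier transform of \<open>\<partial>_x^{-1} f\<close> (symbol \<open>1/(i\<xi>)\<close>, principal value);
  only used for f whose Fourier transform vanishes near 0.\<close>
definition ft_antideriv :: "(real \<Rightarrow> complex) \<Rightarrow> real \<Rightarrow> complex" where
  "ft_antideriv f \<xi> = f \<xi> / (\<i> * complex_of_real \<xi>)"

text \<open>Fourier transform of \<open>u \<cdot> w^k\<close> given \<open>\<hat>u = v\<close>, \<open>\<hat>w = W\<close>.\<close>
fun ft_mult_pow :: "(real \<Rightarrow> complex) \<Rightarrow> (real \<Rightarrow> complex) \<Rightarrow> nat \<Rightarrow> real \<Rightarrow> complex" where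
  "ft_mult_pow v W 0 = v"
| "ft_mult_pow v W (Suc k) = ft_mult (ft_mult_pow v W k) W"

text \<open>Fourier transform of the gauge transform
  \<open>G(u) = u \<Sum>_k (-\<delta>)^k/k! (\<partial>_x^{-1}(u u^*))^k\<close>.\<close>
definition ft_gauge :: "real \<Rightarrow> (real \<Rightarrow> complex) \<Rightarrow> real \<Rightarrow> complex" where
  "ft_gauge \<delta> v \<xi> =
     (\<Sum>k. complex_of_real ((- \<delta>) ^ k / fact k) *
        ft_mult_pow v (ft_antideriv (ft_mult v (ft_star v))) k \<xi>)"

end

theory Submission
  imports Defs
begin

definition K1 :: "real \<Rightarrow> real \<Rightarrow> real" where
  "K1 y x = (if 0 < x \<and> 0 < y then sqrt (y / x) / (x + y) else 0)"

definition M0 :: ennreal where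
  "M0 = (\<integral>\<^sup>+t. ennreal (K1 1 t) \<partial>lborel)"

lemma K1_nonneg: "0 \<le> K1 y x"
  by (simp add: K1_def)

lemma K1_meas[measurable]: "(\<lambda>p. K1 (f p) (g p)) \<in> borel_measurable M"
  if [measurable]: "f \<in> borel_measurable M" "g \<in> borel_measurable M"
  unfolding K1_def by measurable

lemma K1_int: "(\<integral>\<^sup>+x. ennreal (K1 y x) \<partial>lborel) \<le> M0"
proof (cases "y > 0")
  case False
  then have "\<And>x. K1 y x = 0" by (auto simp: K1_def)
  then show ?thesis by simp
next
  case True
  have "(\<integral>\<^sup>+x. ennreal (K1 y x) \<partial>lborel) = ennreal \<bar>y\<bar> * (\<integral>\<^sup>+x. ennreal (K1 y (0 + y * x)) \<partial>lborel)"
    using True by (intro nn_integral_real_affine) auto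
  also have "(\<lambda>x. ennreal (K1 y (0 + y * x))) = (\<lambda>x. ennreal (K1 1 x) * ennreal (1 / y))"
  proof
    fix x
    have "K1 y (0 + y * x) = K1 1 x * (1 / y)"
    proof (cases "x > 0")
      case True
      have "sqrt (y / (y * x)) = sqrt (1 / x)" using \<open>y > 0\<close> by simp
      moreover have "y * x + y = y * (x + 1)" by (simp add: algebra_simps)
      ultimately show ?thesis using True \<open>y > 0\<close> by (simp add: K1_def field_simps)
    next
      case False
      then show ?thesis using \<open>y > 0\<close> by (auto simp: K1_def zero_less_mult_iff)
    qed
    then show "ennreal (K1 y (0 + y * x)) = ennreal (K1 1 x) * ennreal (1 / y)"
      using \<open>y > 0\<close> by (simp add: ennreal_mult[symmetric] K1_nonneg)
  qed
  also have "(\<integral>\<^sup>+x. ennreal (K1 1 x) * ennreal (1 / y) \<partial>lborel) = M0 * ennreal (1 / y)"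
    unfolding M0_def by (rule nn_integral_multc) measurable
  also have "ennreal \<bar>y\<bar> * (M0 * ennreal (1 / y)) = M0 * ennreal (y * (1 / y))"
    using True by (simp add: mult_ac flip: ennreal_mult)
  also have "\<dots> = M0" using True by simp
  finally show ?thesis by simp
qed

lemma M0_finite: "M0 < \<infinity>"
proof -
  have h1: "((\<lambda>x. x powr (-1/2)) has_integral (1 powr (-1/2+1) / (-1/2+1))) {0..1::real}"
    by (rule has_integral_powr_from_0) auto
  have h2: "((\<lambda>x. x powr (-3/2)) has_integral (-(1 powr (-3/2+1)) / (-3/2+1))) {1::real..}"
    by (rule has_integral_powr_to_inf) auto
  have e1: "(\<integral>\<^sup>+x. ennreal (x powr (-1/2)) * indicator {0..1} x \<partial>lborel) = ennreal (1 powr (-1/2+1) / (-1/2+1))"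
    by (rule nn_integral_has_integral_lebesgue'[OF _ h1]) auto
  have e2: "(\<integral>\<^sup>+x. ennreal (x powr (-3/2)) * indicator {1..} x \<partial>lborel) = ennreal (-(1 powr (-3/2+1)) / (-3/2+1))"
    by (rule nn_integral_has_integral_lebesgue'[OF _ h2]) auto
  have "M0 \<le> (\<integral>\<^sup>+x. ennreal (x powr (-1/2)) * indicator {0..1} x + ennreal (x powr (-3/2)) * indicator {1..} x \<partial>lborel)"
    unfolding M0_def
  proof (rule nn_integral_mono)
    fix x :: real
    show "ennreal (K1 1 x) \<le> ennreal (x powr (-1/2)) * indicator {0..1} x + ennreal (x powr (-3/2)) * indicator {1..} x"
    proof (cases "x > 0")
      case False then show ?thesis by (simp add: K1_def)
    next
      case True
      have "x powr (-1/2) = 1 / x powr (1/2)" using powr_minus_divide[of x "1/2"] by simp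
      also have "\<dots> = 1 / sqrt x" using True by (simp add: powr_half_sqrt)
      also have "\<dots> = sqrt (1/x)" by (simp add: real_sqrt_divide)
      finally have sq: "sqrt (1/x) = x powr (-1/2)" by simp
      show ?thesis
      proof (cases "x \<le> 1")
        case True
        have "K1 1 x \<le> x powr (-1/2)" using \<open>x > 0\<close> sq
          by (auto simp: K1_def divide_le_eq intro!: mult_le_cancel_left1[THEN iffD2] |
              simp add: K1_def field_simps)
        then show ?thesis using True \<open>x>0\<close> by (simp add: ennreal_leI add_increasing2)
      next
        case False
        have "x powr (-3/2) = x powr (-1/2 - 1)" by simp
        also have "\<dots> = x powr (-1/2) / x powr 1" by (rule powr_diff)
        also have "\<dots> = x powr (-1/2) / x" using \<open>x>0\<close> by simp
        finally have "x powr (-3/2) = x powr (-1/2) / x" .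
        then have "K1 1 x \<le> x powr (-3/2)" using \<open>x > 0\<close> sq
          by (simp add: K1_def frac_le)
        then show ?thesis using False \<open>x>0\<close> by (simp add: ennreal_leI add_increasing)
      qed
    qed
  qed
  also have "\<dots> = (\<integral>\<^sup>+x. ennreal (x powr (-1/2)) * indicator {0..1} x \<partial>lborel) + (\<integral>\<^sup>+x. ennreal (x powr (-3/2)) * indicator {1..} x \<partial>lborel)"
    by (rule nn_integral_add) auto
  also have "\<dots> < \<infinity>" unfolding e1 e2 by simp
  finally show ?thesis .
qed

definition kk :: "real \<Rightarrow> real \<Rightarrow> real" where
  "kk b c = (if 0 < b \<and> 0 < c then 1 / (b + c) else 0)"

lemma kk_meas[measurable]: "(\<lambda>p. kk (f p) (g p)) \<in> borel_measurable M"
  if [measurable]: "f \<in> borel_measurable M" "g \<in> borel_measurable M"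
  unfolding kk_def by measurable

lemma kk_nonneg: "0 \<le> kk b c" by (simp add: kk_def)

lemma kk_sqrt: "ennreal (sqrt (K1 b c)) * ennreal (sqrt (K1 c b)) = ennreal (kk b c)"
proof -
  have "sqrt (K1 b c) * sqrt (K1 c b) = kk b c"
  proof (cases "0 < b \<and> 0 < c")
    case True
    then have "K1 b c * K1 c b = (1 / (b + c))^2"
      by (simp add: K1_def real_sqrt_mult[symmetric] power2_eq_square field_simps)
    then have "sqrt (K1 b c * K1 c b) = 1 / (b + c)" using True by simp
    then show ?thesis using True by (simp add: kk_def real_sqrt_mult[symmetric])
  next
    case False then show ?thesis by (auto simp: K1_def kk_def)
  qed
  then show ?thesis by (simp add: ennreal_mult[symmetric] K1_nonneg)
qed

lemma ennreal_sqrt_sq: "0 \<le> k \<Longrightarrow> ennreal (sqrt k) ^ 2 = ennreal k"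
  by (simp add: ennreal_power)

lemma shift_int:
  fixes h :: "real \<Rightarrow> ennreal"
  assumes [measurable]: "h \<in> borel_measurable borel"
  shows "(\<integral>\<^sup>+a. h (\<xi> - a - b) \<partial>lborel) = (\<integral>\<^sup>+x. h x \<partial>lborel)"
    and "(\<integral>\<^sup>+a. h (a - c - b) \<partial>lborel) = (\<integral>\<^sup>+x. h x \<partial>lborel)"
proof -
  have "(\<integral>\<^sup>+x. h x \<partial>lborel) = ennreal \<bar>-1\<bar> * (\<integral>\<^sup>+a. h ((\<xi> - b) + (-1) * a) \<partial>lborel)"
    by (rule nn_integral_real_affine) auto
  also have "(\<lambda>a. h ((\<xi> - b) + (-1) * a)) = (\<lambda>a. h (\<xi> - a - b))"
    by (simp add: algebra_simps)
  finally show "(\<integral>\<^sup>+a. h (\<xi> - a - b) \<partial>lborel) = (\<integral>\<^sup>+x. h x \<partial>lborel)" by simp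
  have "(\<integral>\<^sup>+x. h x \<partial>lborel) = ennreal \<bar>1\<bar> * (\<integral>\<^sup>+a. h ((- c - b) + 1 * a) \<partial>lborel)"
    by (rule nn_integral_real_affine) auto
  also have "(\<lambda>a. h ((- c - b) + 1 * a)) = (\<lambda>a. h (a - c - b))"
    by (simp add: algebra_simps)
  finally show "(\<integral>\<^sup>+a. h (a - c - b) \<partial>lborel) = (\<integral>\<^sup>+x. h x \<partial>lborel)" by simp
qed

lemma trilinear_pointwise:
  fixes G V :: "real \<Rightarrow> ennreal"
  assumes [measurable]: "G \<in> borel_measurable borel" "V \<in> borel_measurable borel"
  shows "(\<integral>\<^sup>+a. \<integral>\<^sup>+b. G a * V b * V (\<xi>-a-b) * ennreal (kk b (\<xi>-a-b)) \<partial>lborel \<partial>lborel)^2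
    \<le> (\<integral>\<^sup>+a. \<integral>\<^sup>+b. G a ^ 2 * V b ^ 2 * ennreal (K1 b (\<xi>-a-b)) \<partial>lborel \<partial>lborel)
      * (\<integral>\<^sup>+a. \<integral>\<^sup>+b. V (\<xi>-a-b) ^ 2 * ennreal (K1 (\<xi>-a-b) b) \<partial>lborel \<partial>lborel)"
proof -
  define X where "X = (\<lambda>(a,b). G a * V b * ennreal (sqrt (K1 b (\<xi>-a-b))))"
  define Y where "Y = (\<lambda>(a,b). V (\<xi>-a-b) * ennreal (sqrt (K1 (\<xi>-a-b) b)))"
  have [measurable]: "X \<in> borel_measurable (lborel \<Otimes>\<^sub>M lborel)" "Y \<in> borel_measurable (lborel \<Otimes>\<^sub>M lborel)"
    unfolding X_def Y_def by measurable
  have e1: "(\<integral>\<^sup>+a. \<integral>\<^sup>+b. G a * V b * V (\<xi>-a-b) * ennreal (kk b (\<xi>-a-b)) \<partial>lborel \<partial>lborel)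
     = (\<integral>\<^sup>+a. \<integral>\<^sup>+b. X (a,b) * Y (a,b) \<partial>lborel \<partial>lborel)"
    unfolding X_def Y_def
    by (simp add: mult_ac flip: kk_sqrt)
  have e2: "(\<integral>\<^sup>+a. \<integral>\<^sup>+b. G a ^ 2 * V b ^ 2 * ennreal (K1 b (\<xi>-a-b)) \<partial>lborel \<partial>lborel)
     = (\<integral>\<^sup>+a. \<integral>\<^sup>+b. X (a,b) ^ 2 \<partial>lborel \<partial>lborel)"
    unfolding X_def by (simp add: power_mult_distrib ennreal_sqrt_sq K1_nonneg)
  have e3: "(\<integral>\<^sup>+a. \<integral>\<^sup>+b. V (\<xi>-a-b) ^ 2 * ennreal (K1 (\<xi>-a-b) b) \<partial>lborel \<partial>lborel)
     = (\<integral>\<^sup>+a. \<integral>\<^sup>+b. Y (a,b) ^ 2 \<partial>lborel \<partial>lborel)"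
    unfolding Y_def by (simp add: power_mult_distrib ennreal_sqrt_sq K1_nonneg)
  have f1: "(\<integral>\<^sup>+a. \<integral>\<^sup>+b. X (a,b) * Y (a,b) \<partial>lborel \<partial>lborel) = (\<integral>\<^sup>+p. X p * Y p \<partial>(lborel \<Otimes>\<^sub>M lborel))"
    by (rule lborel.nn_integral_fst[where f="\<lambda>p. X p * Y p"]) measurable
  have f2: "(\<integral>\<^sup>+a. \<integral>\<^sup>+b. X (a,b) ^ 2 \<partial>lborel \<partial>lborel) = (\<integral>\<^sup>+p. X p ^ 2 \<partial>(lborel \<Otimes>\<^sub>M lborel))"
    by (rule lborel.nn_integral_fst[where f="\<lambda>p. X p ^ 2"]) measurable
  have f3: "(\<integral>\<^sup>+a. \<integral>\<^sup>+b. Y (a,b) ^ 2 \<partial>lborel \<partial>lborel) = (\<integral>\<^sup>+p. Y p ^ 2 \<partial>(lborel \<Otimes>\<^sub>M lborel))"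
    by (rule lborel.nn_integral_fst[where f="\<lambda>p. Y p ^ 2"]) measurable
  show ?thesis unfolding e1 e2 e3 f1 f2 f3
    by (rule Cauchy_Schwarz_nn_integral) measurable
qed

lemma B_bound:
  fixes V :: "real \<Rightarrow> ennreal"
  assumes [measurable]: "V \<in> borel_measurable borel"
  shows "(\<integral>\<^sup>+a. \<integral>\<^sup>+b. V (\<xi>-a-b) ^ 2 * ennreal (K1 (\<xi>-a-b) b) \<partial>lborel \<partial>lborel)
     \<le> M0 * (\<integral>\<^sup>+c. V c ^ 2 \<partial>lborel)"
proof -
  have "(\<integral>\<^sup>+a. \<integral>\<^sup>+b. V (\<xi>-a-b) ^ 2 * ennreal (K1 (\<xi>-a-b) b) \<partial>lborel \<partial>lborel)
     = (\<integral>\<^sup>+b. \<integral>\<^sup>+a. V (\<xi>-a-b) ^ 2 * ennreal (K1 (\<xi>-a-b) b) \<partial>lborel \<partial>lborel)"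
    by (rule lborel_pair.Fubini'[symmetric]) measurable
  also have "\<dots> = (\<integral>\<^sup>+b. \<integral>\<^sup>+c. V c ^ 2 * ennreal (K1 c b) \<partial>lborel \<partial>lborel)"
  proof (rule nn_integral_cong)
    fix b
    have m: "(\<lambda>c. V c ^ 2 * ennreal (K1 c b)) \<in> borel_measurable borel" by measurable
    from shift_int(1)[OF m, of \<xi> b] show "(\<integral>\<^sup>+a. V (\<xi>-a-b) ^ 2 * ennreal (K1 (\<xi>-a-b) b) \<partial>lborel) = (\<integral>\<^sup>+c. V c ^ 2 * ennreal (K1 c b) \<partial>lborel)" by simp
  qed
  also have "\<dots> = (\<integral>\<^sup>+c. \<integral>\<^sup>+b. V c ^ 2 * ennreal (K1 c b) \<partial>lborel \<partial>lborel)"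
    by (rule lborel_pair.Fubini') measurable
  also have "\<dots> = (\<integral>\<^sup>+c. V c ^ 2 * (\<integral>\<^sup>+b. ennreal (K1 c b) \<partial>lborel) \<partial>lborel)"
    by (intro nn_integral_cong nn_integral_cmult) measurable
  also have "\<dots> \<le> (\<integral>\<^sup>+c. V c ^ 2 * M0 \<partial>lborel)"
    by (intro nn_integral_mono mult_left_mono K1_int) auto
  also have "\<dots> = M0 * (\<integral>\<^sup>+c. V c ^ 2 \<partial>lborel)"
    by (subst nn_integral_multc) (measurable, simp add: mult_ac)
  finally show ?thesis .
qed

lemma A_bound:
  fixes G V :: "real \<Rightarrow> ennreal"
  assumes [measurable]: "G \<in> borel_measurable borel" "V \<in> borel_measurable borel"
  shows "(\<integral>\<^sup>+\<xi>. \<integral>\<^sup>+a. \<integral>\<^sup>+b. G a ^ 2 * V b ^ 2 * ennreal (K1 b (\<xi>-a-b)) \<partial>lborel \<partial>lborel \<partial>lborel)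
     \<le> M0 * (\<integral>\<^sup>+a. G a ^ 2 \<partial>lborel) * (\<integral>\<^sup>+b. V b ^ 2 \<partial>lborel)"
proof -
  have "(\<integral>\<^sup>+\<xi>. \<integral>\<^sup>+a. \<integral>\<^sup>+b. G a ^ 2 * V b ^ 2 * ennreal (K1 b (\<xi>-a-b)) \<partial>lborel \<partial>lborel \<partial>lborel)
     = (\<integral>\<^sup>+a. \<integral>\<^sup>+\<xi>. \<integral>\<^sup>+b. G a ^ 2 * V b ^ 2 * ennreal (K1 b (\<xi>-a-b)) \<partial>lborel \<partial>lborel \<partial>lborel)"
    by (rule lborel_pair.Fubini') measurable
  also have "\<dots> = (\<integral>\<^sup>+a. \<integral>\<^sup>+b. \<integral>\<^sup>+\<xi>. G a ^ 2 * V b ^ 2 * ennreal (K1 b (\<xi>-a-b)) \<partial>lborel \<partial>lborel \<partial>lborel)"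
    by (intro nn_integral_cong lborel_pair.Fubini') measurable
  also have "\<dots> = (\<integral>\<^sup>+a. \<integral>\<^sup>+b. G a ^ 2 * V b ^ 2 * (\<integral>\<^sup>+\<xi>. ennreal (K1 b (\<xi>-a-b)) \<partial>lborel) \<partial>lborel \<partial>lborel)"
    by (intro nn_integral_cong nn_integral_cmult) measurable
  also have "\<dots> \<le> (\<integral>\<^sup>+a. \<integral>\<^sup>+b. G a ^ 2 * V b ^ 2 * M0 \<partial>lborel \<partial>lborel)"
  proof (intro nn_integral_mono mult_left_mono)
    fix a b
    show "(\<integral>\<^sup>+\<xi>. ennreal (K1 b (\<xi>-a-b)) \<partial>lborel) \<le> M0"
      by (subst shift_int(2)[where h="\<lambda>x. ennreal (K1 b x)"]) (measurable, rule K1_int)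
  qed auto
  also have "\<dots> = (\<integral>\<^sup>+a. G a ^ 2 * ((\<integral>\<^sup>+b. V b ^ 2 \<partial>lborel) * M0) \<partial>lborel)"
    by (intro nn_integral_cong) (simp add: mult.assoc nn_integral_cmult nn_integral_multc)
  also have "\<dots> = (\<integral>\<^sup>+a. G a ^ 2 \<partial>lborel) * ((\<integral>\<^sup>+b. V b ^ 2 \<partial>lborel) * M0)"
    by (rule nn_integral_multc) measurable
  also have "\<dots> = M0 * (\<integral>\<^sup>+a. G a ^ 2 \<partial>lborel) * (\<integral>\<^sup>+b. V b ^ 2 \<partial>lborel)"
    by (simp add: mult_ac)
  finally show ?thesis .
qed

lemma trilinear:
  fixes G V :: "real \<Rightarrow> ennreal"
  assumes [measurable]: "G \<in> borel_measurable borel" "V \<in> borel_measurable borel"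
  shows "(\<integral>\<^sup>+\<xi>. (\<integral>\<^sup>+a. \<integral>\<^sup>+b. G a * V b * V (\<xi>-a-b) * ennreal (kk b (\<xi>-a-b)) \<partial>lborel \<partial>lborel)^2 \<partial>lborel)
    \<le> M0^2 * (\<integral>\<^sup>+a. G a ^ 2 \<partial>lborel) * (\<integral>\<^sup>+b. V b ^ 2 \<partial>lborel)^2"
proof -
  let ?A = "\<lambda>\<xi>. (\<integral>\<^sup>+a. \<integral>\<^sup>+b. G a ^ 2 * V b ^ 2 * ennreal (K1 b (\<xi>-a-b)) \<partial>lborel \<partial>lborel)"
  let ?B = "\<lambda>\<xi>. (\<integral>\<^sup>+a. \<integral>\<^sup>+b. V (\<xi>-a-b) ^ 2 * ennreal (K1 (\<xi>-a-b) b) \<partial>lborel \<partial>lborel)"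
  let ?NV = "(\<integral>\<^sup>+b. V b ^ 2 \<partial>lborel)"
  have "(\<integral>\<^sup>+\<xi>. (\<integral>\<^sup>+a. \<integral>\<^sup>+b. G a * V b * V (\<xi>-a-b) * ennreal (kk b (\<xi>-a-b)) \<partial>lborel \<partial>lborel)^2 \<partial>lborel)
     \<le> (\<integral>\<^sup>+\<xi>. ?A \<xi> * ?B \<xi> \<partial>lborel)"
    by (intro nn_integral_mono trilinear_pointwise) auto
  also have "\<dots> \<le> (\<integral>\<^sup>+\<xi>. ?A \<xi> * (M0 * ?NV) \<partial>lborel)"
    by (intro nn_integral_mono mult_left_mono B_bound) auto
  also have "\<dots> = (\<integral>\<^sup>+\<xi>. ?A \<xi> \<partial>lborel) * (M0 * ?NV)"
    by (rule nn_integral_multc) measurable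
  also have "\<dots> \<le> (M0 * (\<integral>\<^sup>+a. G a ^ 2 \<partial>lborel) * ?NV) * (M0 * ?NV)"
    by (intro mult_right_mono A_bound) auto
  also have "\<dots> = M0^2 * (\<integral>\<^sup>+a. G a ^ 2 \<partial>lborel) * ?NV^2"
    by (simp add: power2_eq_square mult_ac)
  finally show ?thesis .
qed

lemma E_weight_nonneg: "0 \<le> E_weight s \<sigma> x"
  by (simp add: E_weight_def)

lemma japanese_pos: "0 < japanese x"
  by (simp add: japanese_def add_pos_nonneg)

lemma japanese_add: "japanese (x + y) \<le> sqrt 2 * japanese x * japanese y"
proof -
  have "1 + (x + y)^2 \<le> 2 * (1 + x^2) * (1 + y^2)"
  proof -
    have "2 * x * y \<le> x^2 + y^2" using sum_squares_bound[of x y] by simp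
    moreover have "0 \<le> 2 * x^2 * y^2" by simp
    ultimately show ?thesis by (simp add: power2_eq_square algebra_simps)
  qed
  then have "sqrt (1 + (x + y)^2) \<le> sqrt (2 * (1 + x^2) * (1 + y^2))"
    by (rule real_sqrt_le_mono)
  also have "sqrt (2 * (1 + x^2) * (1 + y^2)) = sqrt 2 * sqrt (1 + x^2) * sqrt (1 + y^2)"
    by (simp only: real_sqrt_mult)
  finally show ?thesis by (simp add: japanese_def)
qed

lemma weight3:
  assumes "0 \<le> \<sigma>" "0 \<le> a" "0 \<le> b" "0 \<le> c"
  shows "E_weight s \<sigma> (a + b + c) \<le> 2 powr \<sigma> * E_weight s \<sigma> a * E_weight s \<sigma> b * E_weight s \<sigma> c"
proof -
  have "japanese (a + (b + c)) \<le> sqrt 2 * japanese a * japanese (b + c)"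
    by (rule japanese_add)
  also have "\<dots> \<le> sqrt 2 * japanese a * (sqrt 2 * japanese b * japanese c)"
    using japanese_pos[of a] by (intro mult_left_mono japanese_add) auto
  also have "\<dots> = 2 * japanese a * japanese b * japanese c"
    by (simp add: mult_ac)
  finally have j: "japanese (a + b + c) \<le> 2 * japanese a * japanese b * japanese c"
    by (simp add: add.assoc)
  have "japanese (a + b + c) powr \<sigma> \<le> (2 * japanese a * japanese b * japanese c) powr \<sigma>"
    using j japanese_pos[of "a+b+c"] assms(1) by (intro powr_mono2) auto
  also have "\<dots> = 2 powr \<sigma> * japanese a powr \<sigma> * japanese b powr \<sigma> * japanese c powr \<sigma>"
    using japanese_pos[of a] japanese_pos[of b] japanese_pos[of c]
    by (simp add: powr_mult)
  finally have jp: "japanese (a + b + c) powr \<sigma> \<le> 2 powr \<sigma> * japanese a powr \<sigma> * japanese b powr \<sigma> * japanese c powr \<sigma>" .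
  have e: "(2::real) powr (s * \<bar>a + b + c\<bar>) = 2 powr (s * \<bar>a\<bar>) * 2 powr (s * \<bar>b\<bar>) * 2 powr (s * \<bar>c\<bar>)"
    using assms by (simp add: powr_add[symmetric] algebra_simps)
  show ?thesis
    unfolding E_weight_def e
    using mult_right_mono[OF jp, of "2 powr (s * \<bar>a\<bar>) * 2 powr (s * \<bar>b\<bar>) * 2 powr (s * \<bar>c\<bar>)"]
    by (simp add: mult_ac)
qed

lemma cnj_meas[measurable]: "f \<in> borel_measurable M \<Longrightarrow> (\<lambda>x. cnj (f x)) \<in> borel_measurable M"
proof -
  have "cnj \<in> borel_measurable borel"
    by (rule borel_measurable_continuous_onI) (rule continuous_on_cnj[OF continuous_on_id])
  then show "f \<in> borel_measurable M \<Longrightarrow> (\<lambda>x. cnj (f x)) \<in> borel_measurable M"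
    by (rule measurable_compose[rotated])
qed

definition Wf :: "(real \<Rightarrow> complex) \<Rightarrow> real \<Rightarrow> complex" where
  "Wf v = ft_antideriv (ft_mult v (ft_star v))"

lemma conv_meas[measurable]:
  assumes [measurable]: "f \<in> borel_measurable borel" "g \<in> borel_measurable borel"
  shows "conv f g \<in> borel_measurable borel"
  unfolding conv_def by measurable

lemma ft_mult_meas[measurable]:
  assumes [measurable]: "f \<in> borel_measurable borel" "g \<in> borel_measurable borel"
  shows "ft_mult f g \<in> borel_measurable borel"
  unfolding ft_mult_def by measurable

lemma Wf_meas[measurable]:
  assumes [measurable]: "v \<in> borel_measurable borel"
  shows "Wf v \<in> borel_measurable borel"
proof -
  have [measurable]: "ft_star v \<in> borel_measurable borel" unfolding ft_star_def by measurable
  show ?thesis unfolding Wf_def ft_antideriv_def by measurable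
qed

lemma conv_bound: "ennreal (cmod (conv f g \<xi>)) \<le> (\<integral>\<^sup>+\<eta>. ennreal (cmod (f \<eta>) * cmod (g (\<xi> - \<eta>))) \<partial>lborel)"
proof (cases "integrable lborel (\<lambda>\<eta>. f \<eta> * g (\<xi> - \<eta>))")
  case True
  then show ?thesis unfolding conv_def
    using integral_norm_bound_ennreal[OF True] by (simp add: norm_mult)
next
  case False
  then show ?thesis unfolding conv_def by (simp add: not_integrable_integral_eq)
qed

lemma conv_zero:
  assumes "\<And>\<eta>. f \<eta> = 0 \<or> g (\<xi> - \<eta>) = 0"
  shows "conv f g \<xi> = 0"
proof -
  have "(\<lambda>\<eta>. f \<eta> * g (\<xi> - \<eta>)) = (\<lambda>_. 0)" using assms by (auto intro!: ext)
  then show ?thesis unfolding conv_def by simp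
qed

lemma ft_mult_supp:
  assumes "\<And>x. x < \<alpha> \<Longrightarrow> g x = 0" "\<And>t. t < \<beta> \<Longrightarrow> W t = 0" "\<xi> < \<alpha> + \<beta>"
  shows "ft_mult g W \<xi> = 0"
  unfolding ft_mult_def
  by (subst conv_zero[where \<xi>=\<xi>]) (use assms in \<open>force\<close>, simp)

lemma Wf_supp:
  assumes "\<And>x. x < \<epsilon> \<Longrightarrow> v x = 0" "t < 2 * \<epsilon>"
  shows "Wf v t = 0"
proof -
  have "ft_mult v (ft_star v) t = 0"
    using assms by (intro ft_mult_supp[of \<epsilon> v \<epsilon> "ft_star v"]) (auto simp: ft_star_def)
  then show ?thesis by (simp add: Wf_def ft_antideriv_def)
qed

lemma Wf_bound:
  assumes "0 < \<epsilon>" "\<And>x. x < \<epsilon> \<Longrightarrow> v x = 0" "0 \<le> x"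
  assumes [measurable]: "v \<in> borel_measurable borel"
  shows "ennreal (x * cmod (Wf v t)) \<le> (\<integral>\<^sup>+b. ennreal (x / (2*pi) * (cmod (v b) * cmod (v (t-b)) * kk b (t-b))) \<partial>lborel)"
proof (cases "t > 0")
  case False
  then have "Wf v t = 0" using assms by (intro Wf_supp[of \<epsilon>]) auto
  then show ?thesis by simp
next
  case True
  have "cmod (Wf v t) = cmod (conv v (ft_star v) t) * (1 / (2*pi*t))"
    using True by (simp add: Wf_def ft_antideriv_def ft_mult_def norm_divide norm_mult)
  then have "ennreal (x * cmod (Wf v t)) = ennreal (cmod (conv v (ft_star v) t)) * ennreal (x / (2*pi*t))"
    using True assms(3) by (simp add: ennreal_mult[symmetric] mult_ac)
  also have "\<dots> \<le> (\<integral>\<^sup>+\<eta>. ennreal (cmod (v \<eta>) * cmod (ft_star v (t - \<eta>))) \<partial>lborel) * ennreal (x / (2*pi*t))"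
    by (intro mult_right_mono conv_bound) auto
  also have "\<dots> = (\<integral>\<^sup>+\<eta>. ennreal (cmod (v \<eta>) * cmod (ft_star v (t - \<eta>))) * ennreal (x / (2*pi*t)) \<partial>lborel)"
    by (rule nn_integral_multc[symmetric]) (unfold ft_star_def, measurable)
  also have "\<dots> = (\<integral>\<^sup>+b. ennreal (x / (2*pi) * (cmod (v b) * cmod (v (t-b)) * kk b (t-b))) \<partial>lborel)"
  proof (rule nn_integral_cong)
    fix b
    have "cmod (v b) * cmod (v (t-b)) * (x / (2*pi*t)) = x / (2*pi) * (cmod (v b) * cmod (v (t-b)) * kk b (t-b))"
    proof (cases "v b = 0 \<or> v (t - b) = 0")
      case True then show ?thesis by auto
    next
      case False
      then have "b \<ge> \<epsilon>" "t - b \<ge> \<epsilon>" using assms(2) by (auto simp: not_less[symmetric])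
      then have "kk b (t-b) = 1 / t" using assms(1) by (simp add: kk_def)
      then show ?thesis by simp
    qed
    then show "ennreal (cmod (v b) * cmod (ft_star v (t - b))) * ennreal (x / (2*pi*t)) = ennreal (x / (2*pi) * (cmod (v b) * cmod (v (t-b)) * kk b (t-b)))"
      using True assms(3) by (simp add: ft_star_def ennreal_mult[symmetric])
  qed
  finally show ?thesis .
qed

lemma E_weight_meas[measurable]: "E_weight s \<sigma> \<in> borel_measurable borel"
  unfolding E_weight_def[abs_def] japanese_def by measurable

lemma T_pointwise:
  assumes "0 < \<epsilon>" "\<And>x. x < \<epsilon> \<Longrightarrow> v x = 0" "\<And>x. x < 0 \<Longrightarrow> g x = 0" "0 \<le> \<sigma>"
  shows "ennreal (E_weight s \<sigma> \<xi> / (2*pi)) * ennreal (cmod (g a) / (2*pi) * (cmod (v b) * cmod (v (\<xi>-a-b)) * kk b (\<xi>-a-b)))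
    \<le> ennreal (2 powr \<sigma> / (4*pi^2)) * (ennreal (E_weight s \<sigma> a * cmod (g a)) * ennreal (E_weight s \<sigma> b * cmod (v b))
        * ennreal (E_weight s \<sigma> (\<xi>-a-b) * cmod (v (\<xi>-a-b))) * ennreal (kk b (\<xi>-a-b)))"
proof -
  define c where "c = \<xi> - a - b"
  let ?w = "E_weight s \<sigma>"
  define P where "P = cmod (g a) * cmod (v b) * cmod (v c) * kk b c / (4*pi^2)"
  have P0: "0 \<le> P" unfolding P_def by (simp add: kk_nonneg)
  have L: "?w \<xi> / (2*pi) * (cmod (g a) / (2*pi) * (cmod (v b) * cmod (v c) * kk b c)) = ?w \<xi> * P"
    unfolding P_def by (simp add: power2_eq_square field_simps)
  have R: "2 powr \<sigma> / (4*pi^2) * (?w a * cmod (g a) * (?w b * cmod (v b)) * (?w c * cmod (v c)) * kk b c)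
     = (2 powr \<sigma> * ?w a * ?w b * ?w c) * P"
    unfolding P_def by (simp add: power2_eq_square field_simps)
  have ineq: "?w \<xi> * P \<le> (2 powr \<sigma> * ?w a * ?w b * ?w c) * P"
  proof (cases "g a = 0 \<or> v b = 0 \<or> v c = 0")
    case True
    then have "P = 0" unfolding P_def by auto
    then show ?thesis by simp
  next
    case False
    then have "0 \<le> a" "\<epsilon> \<le> b" "\<epsilon> \<le> c" using assms(2,3) by (auto simp: not_less[symmetric])
    then have "?w (a + b + c) \<le> 2 powr \<sigma> * ?w a * ?w b * ?w c"
      using assms(1,4) by (intro weight3) auto
    moreover have "a + b + c = \<xi>" unfolding c_def by simp
    ultimately show ?thesis using P0 by (intro mult_right_mono) auto
  qed
  have "ennreal (?w \<xi> / (2*pi)) * ennreal (cmod (g a) / (2*pi) * (cmod (v b) * cmod (v c) * kk b c))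
     = ennreal (?w \<xi> / (2*pi) * (cmod (g a) / (2*pi) * (cmod (v b) * cmod (v c) * kk b c)))"
    by (rule ennreal_mult[symmetric]) (auto simp: E_weight_nonneg kk_nonneg)
  also have "\<dots> = ennreal (?w \<xi> * P)" by (simp only: L)
  also have "\<dots> \<le> ennreal ((2 powr \<sigma> * ?w a * ?w b * ?w c) * P)"
    by (rule ennreal_leI[OF ineq])
  also have "\<dots> = ennreal (2 powr \<sigma> / (4*pi^2)) * (ennreal (?w a * cmod (g a)) * ennreal (?w b * cmod (v b))
        * ennreal (?w c * cmod (v c)) * ennreal (kk b c))"
    by (simp add: R[symmetric] ennreal_mult[symmetric] E_weight_nonneg kk_nonneg)
  finally show ?thesis unfolding c_def .
qed

lemma T_bound:
  assumes "0 < \<epsilon>" "\<And>x. x < \<epsilon> \<Longrightarrow> v x = 0" "\<And>x. x < 0 \<Longrightarrow> g x = 0" "0 \<le> \<sigma>"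
  assumes [measurable]: "v \<in> borel_measurable borel" "g \<in> borel_measurable borel"
  shows "ennreal (E_weight s \<sigma> \<xi> * cmod (ft_mult g (Wf v) \<xi>)) \<le> ennreal (2 powr \<sigma> / (4*pi^2)) *
     (\<integral>\<^sup>+a. \<integral>\<^sup>+b. ennreal (E_weight s \<sigma> a * cmod (g a)) * ennreal (E_weight s \<sigma> b * cmod (v b))
        * ennreal (E_weight s \<sigma> (\<xi>-a-b) * cmod (v (\<xi>-a-b))) * ennreal (kk b (\<xi>-a-b)) \<partial>lborel \<partial>lborel)"
proof -
  let ?w = "E_weight s \<sigma>"
  let ?F = "\<lambda>a b. ennreal (cmod (g a) / (2*pi) * (cmod (v b) * cmod (v (\<xi>-a-b)) * kk b (\<xi>-a-b)))"
  have "ennreal (?w \<xi> * cmod (ft_mult g (Wf v) \<xi>)) = ennreal (?w \<xi> / (2*pi)) * ennreal (cmod (conv g (Wf v) \<xi>))"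
    by (simp add: ft_mult_def norm_divide ennreal_mult[symmetric] E_weight_nonneg)
  also have "\<dots> \<le> ennreal (?w \<xi> / (2*pi)) * (\<integral>\<^sup>+a. ennreal (cmod (g a) * cmod (Wf v (\<xi> - a))) \<partial>lborel)"
    by (intro mult_left_mono conv_bound) auto
  also have "\<dots> \<le> ennreal (?w \<xi> / (2*pi)) * (\<integral>\<^sup>+a. \<integral>\<^sup>+b. ?F a b \<partial>lborel \<partial>lborel)"
    using assms(1,2) by (intro mult_left_mono nn_integral_mono Wf_bound) auto
  also have "\<dots> = (\<integral>\<^sup>+a. ennreal (?w \<xi> / (2*pi)) * (\<integral>\<^sup>+b. ?F a b \<partial>lborel) \<partial>lborel)"
    by (rule nn_integral_cmult[symmetric]) measurable
  also have "\<dots> = (\<integral>\<^sup>+a. \<integral>\<^sup>+b. ennreal (?w \<xi> / (2*pi)) * ?F a b \<partial>lborel \<partial>lborel)"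
    by (intro nn_integral_cong nn_integral_cmult[symmetric]) measurable
  also have "\<dots> \<le> (\<integral>\<^sup>+a. \<integral>\<^sup>+b. ennreal (2 powr \<sigma> / (4*pi^2)) * (ennreal (?w a * cmod (g a)) * ennreal (?w b * cmod (v b))
        * ennreal (?w (\<xi>-a-b) * cmod (v (\<xi>-a-b))) * ennreal (kk b (\<xi>-a-b))) \<partial>lborel \<partial>lborel)"
    using assms(1-4) by (intro nn_integral_mono T_pointwise) auto
  also have "\<dots> = (\<integral>\<^sup>+a. ennreal (2 powr \<sigma> / (4*pi^2)) * (\<integral>\<^sup>+b. (ennreal (?w a * cmod (g a)) * ennreal (?w b * cmod (v b))
        * ennreal (?w (\<xi>-a-b) * cmod (v (\<xi>-a-b))) * ennreal (kk b (\<xi>-a-b))) \<partial>lborel) \<partial>lborel)"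
    by (intro nn_integral_cong nn_integral_cmult) measurable
  also have "\<dots> = ennreal (2 powr \<sigma> / (4*pi^2)) * (\<integral>\<^sup>+a. \<integral>\<^sup>+b. ennreal (?w a * cmod (g a)) * ennreal (?w b * cmod (v b))
        * ennreal (?w (\<xi>-a-b) * cmod (v (\<xi>-a-b))) * ennreal (kk b (\<xi>-a-b)) \<partial>lborel \<partial>lborel)"
    by (rule nn_integral_cmult) measurable
  finally show ?thesis .
qed

definition Q :: "real \<Rightarrow> real \<Rightarrow> (real \<Rightarrow> complex) \<Rightarrow> ennreal" where
  "Q s \<sigma> g = (\<integral>\<^sup>+\<xi>. ennreal (E_weight s \<sigma> \<xi> * cmod (g \<xi>)) ^ 2 \<partial>lborel)"

lemma T_Q:
  assumes "0 < \<epsilon>" "\<And>x. x < \<epsilon> \<Longrightarrow> v x = 0" "\<And>x. x < 0 \<Longrightarrow> g x = 0" "0 \<le> \<sigma>"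
  assumes [measurable]: "v \<in> borel_measurable borel" "g \<in> borel_measurable borel"
  shows "Q s \<sigma> (ft_mult g (Wf v)) \<le> ennreal ((2 powr \<sigma> / (4*pi^2))^2) * M0^2 * Q s \<sigma> g * (Q s \<sigma> v)^2"
proof -
  let ?w = "E_weight s \<sigma>"
  define G where "G = (\<lambda>a. ennreal (?w a * cmod (g a)))"
  define V where "V = (\<lambda>a. ennreal (?w a * cmod (v a)))"
  have [measurable]: "G \<in> borel_measurable borel" "V \<in> borel_measurable borel"
    unfolding G_def V_def by measurable
  let ?I = "\<lambda>\<xi>. (\<integral>\<^sup>+a. \<integral>\<^sup>+b. G a * V b * V (\<xi>-a-b) * ennreal (kk b (\<xi>-a-b)) \<partial>lborel \<partial>lborel)"
  let ?k = "ennreal (2 powr \<sigma> / (4*pi^2))"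
  have "Q s \<sigma> (ft_mult g (Wf v)) \<le> (\<integral>\<^sup>+\<xi>. (?k * ?I \<xi>)^2 \<partial>lborel)"
    unfolding Q_def G_def V_def
    using assms by (intro nn_integral_mono power_mono T_bound) auto
  also have "\<dots> = (\<integral>\<^sup>+\<xi>. ?k^2 * ?I \<xi>^2 \<partial>lborel)"
    by (simp add: power_mult_distrib)
  also have "\<dots> = ?k^2 * (\<integral>\<^sup>+\<xi>. ?I \<xi>^2 \<partial>lborel)"
    by (rule nn_integral_cmult) measurable
  also have "\<dots> \<le> ?k^2 * (M0^2 * (\<integral>\<^sup>+a. G a ^ 2 \<partial>lborel) * (\<integral>\<^sup>+b. V b ^ 2 \<partial>lborel)^2)"
    by (intro mult_left_mono trilinear) auto
  also have "\<dots> = ennreal ((2 powr \<sigma> / (4*pi^2))^2) * M0^2 * Q s \<sigma> g * (Q s \<sigma> v)^2"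
    unfolding Q_def G_def V_def by (simp add: ennreal_power mult_ac)
  finally show ?thesis .
qed

lemma gk_props:
  assumes "0 < \<epsilon>" "\<And>x. x < \<epsilon> \<Longrightarrow> v x = 0" "0 \<le> \<sigma>"
  assumes [measurable]: "v \<in> borel_measurable borel"
  assumes B: "ennreal ((2 powr \<sigma> / (4*pi^2))^2) * M0^2 \<le> B"
  shows "ft_mult_pow v (Wf v) k \<in> borel_measurable borel \<and>
    (\<forall>x. x < (2 * real k + 1) * \<epsilon> \<longrightarrow> ft_mult_pow v (Wf v) k x = 0) \<and>
    Q s \<sigma> (ft_mult_pow v (Wf v) k) \<le> (B * (Q s \<sigma> v)^2)^k * Q s \<sigma> v"
proof (induction k)
  case 0
  then show ?case using assms by simp
next
  case (Suc k)
  let ?g = "ft_mult_pow v (Wf v) k"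
  have gm[measurable]: "?g \<in> borel_measurable borel" using Suc by blast
  have gs: "\<And>x. x < (2 * real k + 1) * \<epsilon> \<Longrightarrow> ?g x = 0" using Suc by blast
  have gq: "Q s \<sigma> ?g \<le> (B * (Q s \<sigma> v)^2)^k * Q s \<sigma> v" using Suc by blast
  have m: "ft_mult_pow v (Wf v) (Suc k) \<in> borel_measurable borel" by simp
  have sp: "\<forall>x. x < (2 * real (Suc k) + 1) * \<epsilon> \<longrightarrow> ft_mult_pow v (Wf v) (Suc k) x = 0"
  proof (intro allI impI)
    fix x assume "x < (2 * real (Suc k) + 1) * \<epsilon>"
    then have "x < (2 * real k + 1) * \<epsilon> + 2 * \<epsilon>" by (simp add: algebra_simps)
    then show "ft_mult_pow v (Wf v) (Suc k) x = 0"
      using ft_mult_supp[of "(2 * real k + 1) * \<epsilon>" ?g "2 * \<epsilon>" "Wf v" x] gs Wf_supp[of \<epsilon> v] assms(2) by simp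
  qed
  have g0: "\<And>x. x < 0 \<Longrightarrow> ?g x = 0"
  proof -
    fix x :: real assume "x < 0"
    moreover have "0 \<le> (2 * real k + 1) * \<epsilon>" using assms(1) by simp
    ultimately show "?g x = 0" using gs by simp
  qed
  have "Q s \<sigma> (ft_mult_pow v (Wf v) (Suc k)) \<le> ennreal ((2 powr \<sigma> / (4*pi^2))^2) * M0^2 * Q s \<sigma> ?g * (Q s \<sigma> v)^2"
    using T_Q[OF assms(1,2) g0 assms(3,4) gm] by simp
  also have "\<dots> \<le> B * ((B * (Q s \<sigma> v)^2)^k * Q s \<sigma> v) * (Q s \<sigma> v)^2"
    by (intro mult_mono B gq) auto
  also have "\<dots> = (B * (Q s \<sigma> v)^2)^(Suc k) * Q s \<sigma> v"
    by (simp add: mult_ac)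
  finally show ?case using m sp by blast
qed

lemma series_CS:
  fixes a :: "nat \<Rightarrow> real" and x :: "nat \<Rightarrow> ennreal" and r :: real
  assumes a: "\<And>k. 0 \<le> a k" and r: "r > 0"
  shows "(\<Sum>k. ennreal (a k) * x k)^2 \<le> (\<Sum>k. ennreal (a k * r^k)) * (\<Sum>k. ennreal (a k / r^k) * x k ^ 2)"
proof -
  define f where "f = (\<lambda>k. ennreal (sqrt (a k * r^k)))"
  define g where "g = (\<lambda>k. ennreal (sqrt (a k / r^k)) * x k)"
  have CS: "(\<integral>\<^sup>+k. f k * g k \<partial>count_space UNIV)^2 \<le> (\<integral>\<^sup>+k. f k ^ 2 \<partial>count_space UNIV) * (\<integral>\<^sup>+k. g k ^ 2 \<partial>count_space UNIV)"
    by (rule Cauchy_Schwarz_nn_integral) auto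
  have fg: "f k * g k = ennreal (a k) * x k" for k
  proof -
    have "sqrt (a k * r^k) * sqrt (a k / r^k) = a k"
      using a[of k] r by (simp add: real_sqrt_mult[symmetric])
    then show ?thesis unfolding f_def g_def
      using a[of k] r by (simp add: mult.assoc[symmetric] ennreal_mult[symmetric])
  qed
  have f2: "f k ^ 2 = ennreal (a k * r^k)" for k
    unfolding f_def using a[of k] r by (intro ennreal_sqrt_sq) simp
  have g2: "g k ^ 2 = ennreal (a k / r^k) * x k ^ 2" for k
    unfolding g_def using a[of k] r by (simp add: power_mult_distrib ennreal_sqrt_sq)
  show ?thesis using CS unfolding nn_integral_count_space_nat fg f2 g2 .
qed

lemma exp_series_ennreal:
  assumes "0 \<le> r"
  shows "(\<Sum>k. ennreal (\<bar>d\<bar>^k / fact k * r^k)) = ennreal (exp (\<bar>d\<bar> * r))"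
proof (rule suminf_ennreal_eq)
  show "0 \<le> \<bar>d\<bar>^k / fact k * r^k" for k using assms by simp
  have "(\<lambda>k. \<bar>d\<bar>^k / fact k * r^k) = (\<lambda>n. (\<bar>d\<bar>*r)^n /\<^sub>R fact n)"
    by (auto simp: power_mult_distrib field_simps intro!: ext)
  then show "(\<lambda>k. \<bar>d\<bar>^k / fact k * r^k) sums exp (\<bar>d\<bar> * r)"
    using exp_converges[of "\<bar>d\<bar> * r"] by simp
qed

definition beta :: "real \<Rightarrow> real" where
  "beta \<sigma> = (2 powr \<sigma> / (4*pi^2))^2 * (enn2real M0 + 1)^2"

lemma beta_pos: "0 < beta \<sigma>"
proof -
  have "0 \<le> enn2real M0" by simp
  then have "0 < enn2real M0 + 1" by linarith
  then have "0 < (enn2real M0 + 1)^2" by (rule zero_less_power)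
  moreover have "0 < (2 powr \<sigma> / (4*pi^2))^2" by simp
  ultimately show ?thesis unfolding beta_def by (intro mult_pos_pos)
qed

lemma beta_bound: "ennreal ((2 powr \<sigma> / (4*pi^2))^2) * M0^2 \<le> ennreal (beta \<sigma>)"
proof -
  have h0: "0 \<le> enn2real M0 + 1" by simp
  have "M0 = ennreal (enn2real M0)" using M0_finite by simp
  also have "\<dots> \<le> ennreal (enn2real M0 + 1)" by (rule ennreal_leI) simp
  finally have "M0^2 \<le> ennreal (enn2real M0 + 1) ^ 2" by (intro power_mono) auto
  then have "ennreal ((2 powr \<sigma> / (4*pi^2))^2) * M0^2 \<le> ennreal ((2 powr \<sigma> / (4*pi^2))^2) * ennreal (enn2real M0 + 1) ^ 2"
    by (intro mult_left_mono) auto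
  also have "\<dots> = ennreal ((2 powr \<sigma> / (4*pi^2))^2) * ennreal ((enn2real M0 + 1) ^ 2)"
    by (simp only: ennreal_power[OF h0])
  also have "\<dots> = ennreal (beta \<sigma>)"
    unfolding beta_def by (rule ennreal_mult[symmetric]) auto
  finally show ?thesis .
qed

lemma gauge_exact:
  assumes "0 < \<epsilon>" "\<And>x. x < \<epsilon> \<Longrightarrow> v x = 0" "0 \<le> \<sigma>"
  assumes [measurable]: "v \<in> borel_measurable borel"
  assumes q: "Q s \<sigma> v = ennreal q" "0 \<le> q"
  shows "ft_gauge \<delta> v \<in> borel_measurable borel"
    and "Q s \<sigma> (ft_gauge \<delta> v) \<le> ennreal (exp (2 * \<bar>\<delta>\<bar> * sqrt (beta \<sigma>) * q) * q)"
proof -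
  define g where "g k = ft_mult_pow v (Wf v) k" for k
  define a where "a k = \<bar>\<delta>\<bar>^k / fact k" for k :: nat
  define t where "t k \<xi> = complex_of_real ((-\<delta>)^k / fact k) * g k \<xi>" for k \<xi>
  have gp: "g k \<in> borel_measurable borel \<and> (\<forall>x. x < (2*real k+1)*\<epsilon> \<longrightarrow> g k x = 0) \<and>
      Q s \<sigma> (g k) \<le> (ennreal (beta \<sigma>) * (Q s \<sigma> v)^2)^k * Q s \<sigma> v" for k
    unfolding g_def using gk_props[OF assms(1-4) beta_bound] .
  have gm[measurable]: "g k \<in> borel_measurable borel" for k using gp by blast
  define N where "N \<xi> = {..<nat \<lceil>\<xi>/\<epsilon>\<rceil>}" for \<xi>
  have finN: "finite (N \<xi>)" for \<xi> by (simp add: N_def)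
  have gz: "g k \<xi> = 0" if "k \<notin> N \<xi>" for k \<xi>
  proof -
    from that have "\<xi>/\<epsilon> \<le> real k" by (simp add: N_def not_less)
    then have "\<xi> \<le> real k * \<epsilon>" using assms(1) by (simp add: divide_le_eq)
    moreover have "0 \<le> real k * \<epsilon>" using assms(1) by simp
    moreover have "(2*real k+1)*\<epsilon> = real k * \<epsilon> + real k * \<epsilon> + \<epsilon>" by (simp add: algebra_simps)
    ultimately have "\<xi> < (2*real k+1)*\<epsilon>" using assms(1) by linarith
    then show "g k \<xi> = 0" using gp by blast
  qed
  have gauge_eq: "ft_gauge \<delta> v \<xi> = suminf (\<lambda>k. t k \<xi>)" for \<xi>
    by (simp add: ft_gauge_def t_def g_def Wf_def)
  have sums: "(\<lambda>k. t k \<xi>) sums (\<Sum>k\<in>N \<xi>. t k \<xi>)" for \<xi>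
    by (rule sums_finite) (auto simp: finN t_def gz)
  have gauge_sum: "ft_gauge \<delta> v \<xi> = (\<Sum>k\<in>N \<xi>. t k \<xi>)" for \<xi>
    using sums_unique[OF sums[of \<xi>]] gauge_eq[of \<xi>] by simp
  show meas: "ft_gauge \<delta> v \<in> borel_measurable borel"
  proof (rule borel_measurable_LIMSEQ_metric[where f = "\<lambda>i \<xi>. \<Sum>k<i. t k \<xi>"])
    show "(\<lambda>\<xi>. \<Sum>k<i. t k \<xi>) \<in> borel_measurable borel" for i unfolding t_def by measurable
    show "(\<lambda>i. \<Sum>k<i. t k \<xi>) \<longlonglongrightarrow> ft_gauge \<delta> v \<xi>" for \<xi>
      using sums[of \<xi>] gauge_sum[of \<xi>] by (simp add: sums_def)
  qed
  define X where "X k \<xi> = ennreal (E_weight s \<sigma> \<xi> * cmod (g k \<xi>))" for k \<xi>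
  have Xm[measurable]: "(\<lambda>\<xi>. X k \<xi>) \<in> borel_measurable borel" for k unfolding X_def by measurable
  have a0: "0 \<le> a k" for k by (simp add: a_def)
  have pw: "ennreal (E_weight s \<sigma> \<xi> * cmod (ft_gauge \<delta> v \<xi>)) \<le> (\<Sum>k. ennreal (a k) * X k \<xi>)" for \<xi>
  proof -
    have "cmod (ft_gauge \<delta> v \<xi>) \<le> (\<Sum>k\<in>N \<xi>. cmod (t k \<xi>))" unfolding gauge_sum by (rule norm_sum)
    also have "\<dots> = (\<Sum>k\<in>N \<xi>. a k * cmod (g k \<xi>))"
    proof (rule sum.cong[OF refl])
      fix k
      show "cmod (t k \<xi>) = a k * cmod (g k \<xi>)"
        unfolding t_def a_def norm_mult norm_of_real by (simp add: power_abs abs_divide)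
    qed
    finally have "E_weight s \<sigma> \<xi> * cmod (ft_gauge \<delta> v \<xi>) \<le> E_weight s \<sigma> \<xi> * (\<Sum>k\<in>N \<xi>. a k * cmod (g k \<xi>))"
      by (rule mult_left_mono) (rule E_weight_nonneg)
    also have "\<dots> = (\<Sum>k\<in>N \<xi>. a k * (E_weight s \<sigma> \<xi> * cmod (g k \<xi>)))"
      by (simp add: sum_distrib_left mult_ac)
    finally have "ennreal (E_weight s \<sigma> \<xi> * cmod (ft_gauge \<delta> v \<xi>)) \<le> ennreal (\<Sum>k\<in>N \<xi>. a k * (E_weight s \<sigma> \<xi> * cmod (g k \<xi>)))"
      by (rule ennreal_leI)
    also have "\<dots> = (\<Sum>k\<in>N \<xi>. ennreal (a k * (E_weight s \<sigma> \<xi> * cmod (g k \<xi>))))"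
      by (rule sum_ennreal[symmetric]) (simp add: a0 E_weight_nonneg)
    also have "\<dots> = (\<Sum>k\<in>N \<xi>. ennreal (a k) * X k \<xi>)"
      unfolding X_def by (intro sum.cong refl ennreal_mult) (simp_all add: a0 E_weight_nonneg)
    also have "\<dots> = (\<Sum>k. ennreal (a k) * X k \<xi>)"
      by (rule suminf_finite[symmetric]) (auto simp: finN X_def gz)
    finally show ?thesis .
  qed
  have main: "Q s \<sigma> (ft_gauge \<delta> v) \<le> (\<Sum>k. ennreal (a k * r^k)) * (\<Sum>k. ennreal (a k / r^k) * Q s \<sigma> (g k))"
    if r: "r > 0" for r
  proof -
    have "Q s \<sigma> (ft_gauge \<delta> v) \<le> (\<integral>\<^sup>+\<xi>. (\<Sum>k. ennreal (a k) * X k \<xi>)^2 \<partial>lborel)"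
      unfolding Q_def by (intro nn_integral_mono power_mono pw) auto
    also have "\<dots> \<le> (\<integral>\<^sup>+\<xi>. (\<Sum>k. ennreal (a k * r^k)) * (\<Sum>k. ennreal (a k / r^k) * X k \<xi> ^ 2) \<partial>lborel)"
      by (intro nn_integral_mono series_CS a0 r)
    also have "\<dots> = (\<Sum>k. ennreal (a k * r^k)) * (\<integral>\<^sup>+\<xi>. (\<Sum>k. ennreal (a k / r^k) * X k \<xi> ^ 2) \<partial>lborel)"
      by (rule nn_integral_cmult) measurable
    also have "(\<integral>\<^sup>+\<xi>. (\<Sum>k. ennreal (a k / r^k) * X k \<xi> ^ 2) \<partial>lborel) = (\<Sum>k. \<integral>\<^sup>+\<xi>. ennreal (a k / r^k) * X k \<xi> ^ 2 \<partial>lborel)"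
      by (rule nn_integral_suminf) measurable
    also have "\<dots> = (\<Sum>k. ennreal (a k / r^k) * Q s \<sigma> (g k))"
      unfolding Q_def X_def by (intro suminf_cong nn_integral_cmult) measurable
    finally show ?thesis .
  qed
  have Qg: "Q s \<sigma> (g k) \<le> ennreal ((beta \<sigma> * q^2)^k * q)" for k
  proof -
    have "Q s \<sigma> (g k) \<le> (ennreal (beta \<sigma>) * (Q s \<sigma> v)^2)^k * Q s \<sigma> v" using gp by blast
    also have "\<dots> = ennreal ((beta \<sigma> * q^2)^k * q)"
      using q beta_pos[of \<sigma>] by (simp add: ennreal_power ennreal_mult[symmetric])
    finally show ?thesis .
  qed
  show "Q s \<sigma> (ft_gauge \<delta> v) \<le> ennreal (exp (2 * \<bar>\<delta>\<bar> * sqrt (beta \<sigma>) * q) * q)"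
  proof (cases "q = 0")
    case True
    have "Q s \<sigma> (g k) = 0" for k using Qg[of k] True by simp
    then have "Q s \<sigma> (ft_gauge \<delta> v) \<le> 0" using main[of 1] by simp
    then show ?thesis by simp
  next
    case False
    then have qp: "q > 0" using q by simp
    define r where "r = sqrt (beta \<sigma>) * q"
    have rp: "r > 0" unfolding r_def using qp beta_pos[of \<sigma>] by simp
    have r2: "beta \<sigma> * q^2 = r^2" unfolding r_def using beta_pos[of \<sigma>] by (simp add: power_mult_distrib)
    have "Q s \<sigma> (ft_gauge \<delta> v) \<le> (\<Sum>k. ennreal (a k * r^k)) * (\<Sum>k. ennreal (a k / r^k) * Q s \<sigma> (g k))"
      by (rule main[OF rp])
    also have "\<dots> \<le> (\<Sum>k. ennreal (a k * r^k)) * (\<Sum>k. ennreal (a k / r^k) * ennreal ((beta \<sigma> * q^2)^k * q))"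
      by (intro mult_left_mono suminf_le Qg) auto
    also have "(\<lambda>k. ennreal (a k / r^k) * ennreal ((beta \<sigma> * q^2)^k * q)) = (\<lambda>k. ennreal (a k * r^k) * ennreal q)"
    proof
      fix k
      have "a k / r^k * ((beta \<sigma> * q^2)^k * q) = a k * r^k * q"
        using rp unfolding r2 by (simp add: power_mult[symmetric] power2_eq_square power_mult_distrib field_simps)
      moreover have "ennreal (a k / r^k) * ennreal ((beta \<sigma> * q^2)^k * q) = ennreal (a k / r^k * ((beta \<sigma> * q^2)^k * q))"
        using rp qp a0[of k] beta_pos[of \<sigma>] by (intro ennreal_mult[symmetric]) auto
      moreover have "ennreal (a k * r^k) * ennreal q = ennreal (a k * r^k * q)"
        using rp qp a0[of k] by (intro ennreal_mult[symmetric]) auto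
      ultimately show "ennreal (a k / r^k) * ennreal ((beta \<sigma> * q^2)^k * q) = ennreal (a k * r^k) * ennreal q"
        by simp
    qed
    also have "(\<Sum>k. ennreal (a k * r^k)) = ennreal (exp (\<bar>\<delta>\<bar> * r))"
      unfolding a_def using rp by (intro exp_series_ennreal) simp
    also have "ennreal (exp (\<bar>\<delta>\<bar> * r)) * (\<Sum>k. ennreal (a k * r^k) * ennreal q) = ennreal (exp (\<bar>\<delta>\<bar> * r)) * (ennreal (exp (\<bar>\<delta>\<bar> * r)) * ennreal q)"
      by (simp add: \<open>(\<Sum>k. ennreal (a k * r^k)) = ennreal (exp (\<bar>\<delta>\<bar> * r))\<close>)
    also have "\<dots> = ennreal (exp (\<bar>\<delta>\<bar> * r) * (exp (\<bar>\<delta>\<bar> * r) * q))"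
      using qp by (simp add: ennreal_mult[symmetric])
    also have "exp (\<bar>\<delta>\<bar> * r) * (exp (\<bar>\<delta>\<bar> * r) * q) = exp (\<bar>\<delta>\<bar> * r + \<bar>\<delta>\<bar> * r) * q"
      by (simp only: exp_add mult.assoc)
    also have "\<bar>\<delta>\<bar> * r + \<bar>\<delta>\<bar> * r = 2 * \<bar>\<delta>\<bar> * sqrt (beta \<sigma>) * q"
      unfolding r_def by simp
    finally show ?thesis .
  qed
qed




lemma gauge_summable:
  assumes "0 < \<epsilon>" "\<And>x. x < \<epsilon> \<Longrightarrow> v x = 0"
  assumes [measurable]: "v \<in> borel_measurable borel"
  shows "summable (\<lambda>k. complex_of_real ((-\<delta>)^k / fact k) * ft_mult_pow v (Wf v) k \<xi>)"
proof -
  have gz: "ft_mult_pow v (Wf v) k \<xi> = 0" if "k \<notin> {..<nat \<lceil>\<xi>/\<epsilon>\<rceil>}" for k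
  proof -
    from that have "\<xi>/\<epsilon> \<le> real k" by (simp add: not_less)
    then have "\<xi> \<le> real k * \<epsilon>" using assms(1) by (simp add: divide_le_eq)
    moreover have "0 \<le> real k * \<epsilon>" using assms(1) by simp
    moreover have "(2*real k+1)*\<epsilon> = real k * \<epsilon> + real k * \<epsilon> + \<epsilon>" by (simp add: algebra_simps)
    ultimately have "\<xi> < (2*real k+1)*\<epsilon>" using assms(1) by linarith
    moreover have "ft_mult_pow v (Wf v) k \<in> borel_measurable borel \<and>
      (\<forall>x. x < (2 * real k + 1) * \<epsilon> \<longrightarrow> ft_mult_pow v (Wf v) k x = 0) \<and>
      Q 0 0 (ft_mult_pow v (Wf v) k) \<le> (ennreal (beta 0) * (Q 0 0 v)^2)^k * Q 0 0 v"
      by (rule gk_props[where \<sigma>=0 and s=0 and B="beta 0", OF assms(1,2) order_refl assms(3) beta_bound])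
    ultimately show ?thesis by blast
  qed
  show ?thesis
    by (rule sums_summable[OF sums_finite[of "{..<nat \<lceil>\<xi>/\<epsilon>\<rceil>}"]]) (auto simp: gz)
qed

lemma in_E_iff: "g \<in> borel_measurable borel \<Longrightarrow> in_E s \<sigma> g \<longleftrightarrow> Q s \<sigma> g < \<infinity>"
  unfolding in_E_def Q_def
  by (simp add: integrable_iff_bounded ennreal_power E_weight_nonneg)

lemma E_norm_Q: "g \<in> borel_measurable borel \<Longrightarrow> E_norm s \<sigma> g = sqrt (enn2real (Q s \<sigma> g))"
  unfolding E_norm_def Q_def
  by (subst integral_eq_nn_integral) (auto simp: ennreal_power E_weight_nonneg)

theorem main_result:
  fixes \<epsilon>0 \<delta> \<sigma> :: real
  assumes "\<epsilon>0 > 0" and "\<sigma> > 0"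
  shows "\<exists>C>0. \<forall>s v. s \<le> 0 \<longrightarrow> in_E s \<sigma> v \<longrightarrow>
           (AE \<xi> in lborel. \<xi> < \<epsilon>0 \<longrightarrow> v \<xi> = 0) \<longrightarrow>
           in_E s \<sigma> (ft_gauge \<delta> v) \<and>
           E_norm s \<sigma> (ft_gauge \<delta> v) \<le> exp (C * (E_norm s \<sigma> v)\<^sup>2) * E_norm s \<sigma> v"
proof (intro exI[of _ "\<bar>\<delta>\<bar> * sqrt (beta \<sigma>) + 1"] conjI allI impI)
  show "0 < \<bar>\<delta>\<bar> * sqrt (beta \<sigma>) + 1" using beta_pos[of \<sigma>] by (simp add: add_nonneg_pos)
  fix s v
  assume inE: "in_E s \<sigma> v" and AEv: "AE \<xi> in lborel. \<xi> < \<epsilon>0 \<longrightarrow> v \<xi> = 0"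
  have vm[measurable]: "v \<in> borel_measurable borel" using inE by (simp add: in_E_def)
  define v' where "v' x = (if x < \<epsilon>0 then 0 else v x)" for x
  have v'm[measurable]: "v' \<in> borel_measurable borel" unfolding v'_def by measurable
  have v'z: "\<And>x. x < \<epsilon>0 \<Longrightarrow> v' x = 0" by (simp add: v'_def)
  have AE1: "AE x in lborel. v x = v' x" using AEv by eventually_elim (simp add: v'_def)
  have AE2: "AE x in lborel. v (t - x) = v' (t - x)" for t
  proof -
    have "AE x in lborel. v (t + (-1) * x) = v' (t + (-1) * x)"
      by (rule AE_borel_affine[OF _ _ AE1]) (simp, measurable)
    then show ?thesis by simp
  qed
  have Weq: "Wf v = Wf v'"
  proof
    fix t
    have "conv v (ft_star v) t = conv v' (ft_star v') t"
      unfolding conv_def ft_star_def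
      by (rule integral_cong_AE) (measurable, use AE1 AE2[of t] in eventually_elim, simp)
    then show "Wf v t = Wf v' t" by (simp add: Wf_def ft_antideriv_def ft_mult_def)
  qed
  have m1: "ft_mult v (Wf v') = ft_mult v' (Wf v')"
  proof
    fix \<xi>
    have "conv v (Wf v') \<xi> = conv v' (Wf v') \<xi>"
      unfolding conv_def
      by (rule integral_cong_AE) (measurable, use AE1 in eventually_elim, simp)
    then show "ft_mult v (Wf v') \<xi> = ft_mult v' (Wf v') \<xi>" by (simp add: ft_mult_def)
  qed
  have pw: "ft_mult_pow v (Wf v') (Suc k) = ft_mult_pow v' (Wf v') (Suc k)" for k
    by (induction k) (simp_all add: m1)
  have geq: "ft_gauge \<delta> v \<xi> = ft_gauge \<delta> v' \<xi> + (v \<xi> - v' \<xi>)" for \<xi>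
  proof -
    define T where "T k = complex_of_real ((-\<delta>)^k / fact k) * ft_mult_pow v' (Wf v') k \<xi>" for k
    have Tv: "complex_of_real ((-\<delta>)^k / fact k) * ft_mult_pow v (Wf v') k \<xi> = T k + (if k = 0 then v \<xi> - v' \<xi> else 0)" for k
      by (cases k) (simp add: T_def, simp add: T_def pw del: ft_mult_pow.simps)
    have "T sums ft_gauge \<delta> v' \<xi>"
      unfolding T_def ft_gauge_def Wf_def[symmetric]
      by (rule summable_sums, rule gauge_summable[OF assms(1) v'z v'm])
    moreover have "(\<lambda>k. if k = 0 then v \<xi> - v' \<xi> else 0) sums (v \<xi> - v' \<xi>)"
      using sums_single[of 0 "\<lambda>_. v \<xi> - v' \<xi>"] by simp
    ultimately have "(\<lambda>k. T k + (if k = 0 then v \<xi> - v' \<xi> else 0)) sums (ft_gauge \<delta> v' \<xi> + (v \<xi> - v' \<xi>))"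
      by (rule sums_add)
    then have "(\<lambda>k. complex_of_real ((-\<delta>)^k / fact k) * ft_mult_pow v (Wf v) k \<xi>) sums (ft_gauge \<delta> v' \<xi> + (v \<xi> - v' \<xi>))"
      unfolding Weq Tv .
    then show ?thesis unfolding ft_gauge_def Wf_def[symmetric] by (rule sums_unique[symmetric])
  qed
  have Qvv': "Q s \<sigma> v = Q s \<sigma> v'"
    unfolding Q_def by (rule nn_integral_cong_AE) (use AE1 in eventually_elim, simp)
  have Qfin: "Q s \<sigma> v < \<infinity>" using inE vm in_E_iff by blast
  define q where "q = enn2real (Q s \<sigma> v)"
  have q0: "0 \<le> q" by (simp add: q_def)
  have Qq: "Q s \<sigma> v' = ennreal q" using Qfin unfolding q_def Qvv' by simp
  have g'm[measurable]: "ft_gauge \<delta> v' \<in> borel_measurable borel"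
    using gauge_exact(1)[OF assms(1) v'z _ v'm Qq q0] assms(2) by simp
  have g'Q: "Q s \<sigma> (ft_gauge \<delta> v') \<le> ennreal (exp (2 * \<bar>\<delta>\<bar> * sqrt (beta \<sigma>) * q) * q)"
    using gauge_exact(2)[OF assms(1) v'z _ v'm Qq q0] assms(2) by simp
  have gm[measurable]: "ft_gauge \<delta> v \<in> borel_measurable borel"
  proof -
    have "ft_gauge \<delta> v = (\<lambda>\<xi>. ft_gauge \<delta> v' \<xi> + (v \<xi> - v' \<xi>))" by (rule ext) (rule geq)
    also have "\<dots> \<in> borel_measurable borel" by measurable
    finally show ?thesis .
  qed
  have h3: "ft_gauge \<delta> v \<xi> = ft_gauge \<delta> v' \<xi>" if "v \<xi> = v' \<xi>" for \<xi>
  proof -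
    have "ft_gauge \<delta> v \<xi> = ft_gauge \<delta> v' \<xi> + (v \<xi> - v' \<xi>)" by (rule geq)
    also have "\<dots> = ft_gauge \<delta> v' \<xi>" using that by (simp only: diff_self add_0_right)
    finally show ?thesis .
  qed
  have AE3: "AE \<xi> in lborel. ft_gauge \<delta> v \<xi> = ft_gauge \<delta> v' \<xi>"
    by (rule eventually_mono[OF AE1 h3])
  have Qg: "Q s \<sigma> (ft_gauge \<delta> v) = Q s \<sigma> (ft_gauge \<delta> v')"
    unfolding Q_def by (rule nn_integral_cong_AE) (rule eventually_mono[OF AE3], simp)
  have QgB: "Q s \<sigma> (ft_gauge \<delta> v) \<le> ennreal (exp (2 * \<bar>\<delta>\<bar> * sqrt (beta \<sigma>) * q) * q)"
    using g'Q unfolding Qg .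
  then have Qgfin: "Q s \<sigma> (ft_gauge \<delta> v) < \<infinity>" by (rule le_less_trans) simp
  show "in_E s \<sigma> (ft_gauge \<delta> v)" using Qgfin gm in_E_iff by blast
  have Nv: "E_norm s \<sigma> v = sqrt q" unfolding q_def by (rule E_norm_Q[OF vm])
  have "E_norm s \<sigma> (ft_gauge \<delta> v) = sqrt (enn2real (Q s \<sigma> (ft_gauge \<delta> v)))" by (rule E_norm_Q[OF gm])
  also have "\<dots> \<le> sqrt (exp (2 * \<bar>\<delta>\<bar> * sqrt (beta \<sigma>) * q) * q)"
  proof (rule real_sqrt_le_mono)
    show "enn2real (Q s \<sigma> (ft_gauge \<delta> v)) \<le> exp (2 * \<bar>\<delta>\<bar> * sqrt (beta \<sigma>) * q) * q"
      using q0 by (intro enn2real_leI QgB) simp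
  qed
  also have "\<dots> = exp (\<bar>\<delta>\<bar> * sqrt (beta \<sigma>) * q) * sqrt q"
  proof -
    let ?a = "\<bar>\<delta>\<bar> * sqrt (beta \<sigma>) * q"
    have "exp (2 * \<bar>\<delta>\<bar> * sqrt (beta \<sigma>) * q) = exp (?a + ?a)"
      by (simp add: algebra_simps)
    also have "\<dots> = (exp ?a)^2" by (simp only: exp_add power2_eq_square)
    finally have e: "exp (2 * \<bar>\<delta>\<bar> * sqrt (beta \<sigma>) * q) = (exp ?a)^2" .
    have "sqrt (exp (2 * \<bar>\<delta>\<bar> * sqrt (beta \<sigma>) * q) * q) = sqrt ((exp ?a)^2) * sqrt q"
      unfolding e by (rule real_sqrt_mult)
    moreover have "sqrt ((exp ?a)^2) = exp ?a" by (rule real_sqrt_unique) auto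
    ultimately show ?thesis by simp
  qed
  also have "\<dots> \<le> exp ((\<bar>\<delta>\<bar> * sqrt (beta \<sigma>) + 1) * (E_norm s \<sigma> v)\<^sup>2) * sqrt q"
  proof (intro mult_right_mono)
    have "(E_norm s \<sigma> v)\<^sup>2 = q" unfolding Nv using q0 by simp
    then have "\<bar>\<delta>\<bar> * sqrt (beta \<sigma>) * q \<le> (\<bar>\<delta>\<bar> * sqrt (beta \<sigma>) + 1) * (E_norm s \<sigma> v)\<^sup>2"
      using q0 by (simp add: distrib_right)
    then show "exp (\<bar>\<delta>\<bar> * sqrt (beta \<sigma>) * q) \<le> exp ((\<bar>\<delta>\<bar> * sqrt (beta \<sigma>) + 1) * (E_norm s \<sigma> v)\<^sup>2)"
      by simp
    show "0 \<le> sqrt q" using q0 by simp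
  qed
  also have "\<dots> = exp ((\<bar>\<delta>\<bar> * sqrt (beta \<sigma>) + 1) * (E_norm s \<sigma> v)\<^sup>2) * E_norm s \<sigma> v"
    unfolding Nv by (rule refl)
  finally show "E_norm s \<sigma> (ft_gauge \<delta> v) \<le> exp ((\<bar>\<delta>\<bar> * sqrt (beta \<sigma>) + 1) * (E_norm s \<sigma> v)\<^sup>2) * E_norm s \<sigma> v" .
qed

theorem proposition3p2:
  fixes \<epsilon>0 \<delta> \<sigma> :: real
  assumes "\<epsilon>0 > 0" and "\<sigma> > 0"
  shows "\<exists>C>0. \<forall>s v. s \<le> 0 \<longrightarrow> in_E s \<sigma> v \<longrightarrow>
           (AE \<xi> in lborel. \<xi> < \<epsilon>0 \<longrightarrow> v \<xi> = 0) \<longrightarrow>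
           in_E s \<sigma> (ft_gauge \<delta> v) \<and>
           E_norm s \<sigma> (ft_gauge \<delta> v) \<le> exp (C * (E_norm s \<sigma> v)\<^sup>2) * E_norm s \<sigma> v"
  using main_result[OF assms] .

end
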